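(* Let $n\ge1$, $P\ge0$, and $\mathbf{h}\in\mathbb{R}^n\setminus\{\mathbf{0}\}$. Let $\mathbf{G}=(1+P\|\mathbf{h}\|^2)\mathbf{I}-P\mathbf{h}\mathbf{h}^T$, $f(\mathbf{a})=\mathbf{a}^T\mathbf{G}\mathbf{a}$, and $\psi=\sqrt{1+P\|\mathbf{h}\|^2}$. Define $$\Phi=\bigcup_{j:\,h_j\ne0}\left\{\frac{c}{|h_j|}\;:\;c-\tfrac12\in\mathbb{Z},\ |c|\le\lceil\psi\rceil+\tfrac12\right\},$$ and list its elements in increasing order as $\xi_1<\xi_2<\dots<\xi_m$. For $x\in\mathbb{R}$ let $\mathbf{a}(x)=\lfloor\mathbf{h}x\rceil$ (componentwise nearest integer). Then $$\min_{\mathbf{a}\in\mathbb{Z}^n\setminus\{\mathbf{0}\}}f(\mathbf{a})=\min\Big(\min_{1\le i\le n}G_{ii},\ \min\big\{f(\mathbf{a}(\tfrac{\xi_i+\xi_{i+1}}{2}))\;:\;1\le i<m,\ \mathbf{a}(\tfrac{\xi_i+\xi_{i+1}}{2})\ne\mathbf{0}\big\}\Big).$$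
   Context: $\|\cdot\|$ is the Euclidean norm, $\lceil\cdot\rceil$ the ceiling function, $\mathbf{I}$ the $n\times n$ identity matrix. The values $G_{ii}=f(\mathbf{u}_i)$ correspond to the standard unit vectors $\mathbf{u}_i$. *)

theory Defs
  imports "HOL-Analysis.Analysis"
begin

definition Gmat :: "real \<Rightarrow> real^'n \<Rightarrow> real^'n^'n" where
  "Gmat P h = (\<chi> i j. (1 + P * (norm h)\<^sup>2) * (if i = j then 1 else 0) - P * (h $ i) * (h $ j))"

definition fq :: "real \<Rightarrow> real^'n \<Rightarrow> real^'n \<Rightarrow> real" where
  "fq P h a = a \<bullet> (Gmat P h *v a)"

definition psi :: "real \<Rightarrow> real^'n \<Rightarrow> real" where
  "psi P h = sqrt (1 + P * (norm h)\<^sup>2)"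

definition int_vec :: "real^'n \<Rightarrow> bool" where
  "int_vec a \<longleftrightarrow> (\<forall>i. a $ i \<in> \<int>)"

text \<open>Componentwise nearest integer of h x (ties rounded up, via round).\<close>
definition avec :: "real^'n \<Rightarrow> real \<Rightarrow> real^'n" where
  "avec h x = (\<chi> j. of_int (round (h $ j * x)))"

definition Phi :: "real \<Rightarrow> real^'n \<Rightarrow> real set" where
  "Phi P h = (\<Union>j\<in>{j. h $ j \<noteq> 0}.
      {c / \<bar>h $ j\<bar> | c. c - 1/2 \<in> \<int> \<and> \<bar>c\<bar> \<le> of_int \<lceil>psi P h\<rceil> + 1/2})"

text \<open>Elements of Phi in increasing order, 0-indexed: xi 0 < xi 1 < ... < xi (m-1).\<close>
definition xi :: "real \<Rightarrow> real^'n \<Rightarrow> nat \<Rightarrow> real" where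
  "xi P h i = sorted_list_of_set (Phi P h) ! i"

definition mcard :: "real \<Rightarrow> real^'n \<Rightarrow> nat" where
  "mcard P h = card (Phi P h)"

definition rhs_val :: "real \<Rightarrow> real^'n \<Rightarrow> real" where
  "rhs_val P h = Min ({Gmat P h $ i $ i | i. True} \<union>
      {fq P h (avec h ((xi P h i + xi P h (i+1)) / 2)) | i.
          i + 1 < mcard P h \<and> avec h ((xi P h i + xi P h (i+1)) / 2) \<noteq> 0})"

end

theory Submission imports Defs begin

lemma Gv: "(Gmat P h *v a) = (1 + P*(norm h)^2) *\<^sub>R a - (P * (h \<bullet> a)) *\<^sub>R h"
proof -
  have "(Gmat P h *v a) $ i = ((1 + P*(norm h)^2) *\<^sub>R a - (P * (h \<bullet> a)) *\<^sub>R h) $ i" for i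
  proof -
    have "(Gmat P h *v a) $ i = (\<Sum>j\<in>UNIV. ((1 + P * (norm h)\<^sup>2) * (if i = j then 1 else 0)) * a $ j
        - (P * h $ i) * (h $ j * a $ j))"
      unfolding Gmat_def matrix_vector_mult_def by (simp add: algebra_simps)
    also have "... = (1 + P * (norm h)\<^sup>2) * a $ i - (P * h $ i) * (h \<bullet> a)"
    proof -
      have e: "\<And>j. ((1 + P * (norm h)\<^sup>2) * (if i = j then 1 else 0)) * a $ j
         = (if i = j then (1 + P * (norm h)\<^sup>2) * a $ i else 0)" by simp
      show ?thesis
        by (simp only: sum_subtractf e sum.delta inner_vec_def sum_distrib_left[symmetric]) simp
    qed
    finally show ?thesis by (simp add: algebra_simps)
  qed
  then show ?thesis by (simp add: vec_eq_iff)
qed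

lemma fq_eq: "fq P h a = (1 + P*(norm h)^2) * (a \<bullet> a) - P * (h \<bullet> a)^2"
  unfolding fq_def Gv by (simp add: inner_diff_right algebra_simps inner_commute power2_eq_square)

lemma D_eq: "(\<Sum>j\<in>UNIV. (b$j - x*h$j)^2) = b \<bullet> b - 2*x*(h \<bullet> b) + x^2*(h \<bullet> h)"
  unfolding inner_vec_def
  by (simp add: power2_diff sum.distrib sum_subtractf sum_distrib_left algebra_simps power2_eq_square)

lemma key_ident:
  fixes h b :: "real^'n"
  shows "(1 + P*(norm h)^2) * (P * (\<Sum>j\<in>UNIV. (b$j - x*h$j)^2) + x^2) - P * fq P h b
     = ((1 + P*(norm h)^2)*x - P*(h \<bullet> b))^2"
  unfolding fq_eq D_eq power2_norm_eq_inner
  by (simp add: algebra_simps power2_eq_square)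

lemma gap:
  assumes "sorted L" "Suc i < length L" "e \<in> set L"
  shows "\<not> (L!i < e \<and> e < L!Suc i)"
proof
  assume *: "L!i < e \<and> e < L!Suc i"
  from assms(3) obtain k where k: "k < length L" "e = L!k" by (metis in_set_conv_nth)
  show False
  proof (cases "k \<le> i")
    case True then show False using sorted_nth_mono[OF assms(1) True, of] assms k * by auto
  next
    case False then have si: "Suc i \<le> k" by simp
    show False using sorted_nth_mono[OF assms(1) si] k * by (simp add: not_le[symmetric])
  qed
qed

lemma bracket:
  fixes x :: real
  shows "sorted L \<Longrightarrow> u \<in> set L \<Longrightarrow> u \<le> x \<Longrightarrow> v \<in> set L \<Longrightarrow> x < v \<Longrightarrow>
    \<exists>i. Suc i < length L \<and> L!i \<le> x \<and> x < L!Suc i"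
proof (induction L arbitrary: u)
  case Nil then show ?case by simp
next
  case (Cons y ys)
  show ?case
  proof (cases ys)
    case Nil then show ?thesis using Cons.prems by auto
  next
    case (Cons z zs)
    show ?thesis
    proof (cases "x < z")
      case True
      have "y \<le> u" using Cons.prems(1,2) by auto
      then show ?thesis using True Cons.prems(3) \<open>ys = z # zs\<close> by (intro exI[of _ 0]) auto
    next
      case False
      have "y \<le> u" using Cons.prems(1,2) by auto
      have vy: "v \<in> set ys" using Cons.prems \<open>y \<le> u\<close> by auto
      obtain i where "Suc i < length ys" "ys!i \<le> x" "x < ys!Suc i"
        using Cons.IH[of z] Cons.prems vy False \<open>ys = z # zs\<close> by auto
      then show ?thesis by (intro exI[of _ "Suc i"]) auto
    qed
  qed
qed

lemma int_sq:
  fixes y :: real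
  assumes "\<bar>of_int k - y\<bar> \<le> 1/2"
  shows "(of_int k - y)^2 \<le> (of_int z - y)^2"
proof (cases "z = k")
  case False
  then have "\<bar>of_int z - of_int k\<bar> \<ge> (1::real)"
    by (metis (mono_tags) of_int_1_le_iff of_int_abs of_int_diff zero_less_abs_iff int_one_le_iff_zero_less right_minus_eq)
  then have "\<bar>of_int k - y\<bar> \<le> \<bar>of_int z - y\<bar>" using assms by linarith
  then show ?thesis by (simp add: abs_le_square_iff)
qed simp

lemma halfint_finite:
  fixes B :: real
  shows "finite {c::real. c - 1/2 \<in> \<int> \<and> \<bar>c\<bar> \<le> B}"
proof -
  let ?M = "\<lceil>B\<rceil> + 1"
  have "{c::real. c - 1/2 \<in> \<int> \<and> \<bar>c\<bar> \<le> B} \<subseteq> (\<lambda>k. of_int k + 1/2) ` {-?M..?M}"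
  proof
    fix c :: real assume "c \<in> {c::real. c - 1/2 \<in> \<int> \<and> \<bar>c\<bar> \<le> B}"
    then obtain k where k: "c - 1/2 = of_int k" and cb: "\<bar>c\<bar> \<le> B" by (auto elim: Ints_cases)
    have "of_int k \<le> B + 1" "of_int k \<ge> - B - 1" using k cb by (auto simp: abs_le_iff)
    then have "k \<le> ?M" "k \<ge> -?M" by linarith+
    then show "c \<in> (\<lambda>k. of_int k + 1/2) ` {-?M..?M}" using k by (intro image_eqI[of _ _ k]) auto
  qed
  then show ?thesis by (rule finite_subset) simp
qed

lemma Phi_finite: "finite (Phi P h)"
  unfolding Phi_def
  by (intro finite_UN_I) (simp_all add: Setcompr_eq_image halfint_finite)

lemma Phi_mem:
  assumes "h $ j \<noteq> 0" "c - 1/2 \<in> \<int>" "\<bar>c\<bar> \<le> of_int \<lceil>psi P h\<rceil> + 1/2"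
  shows "c / h $ j \<in> Phi P h"
proof (cases "h $ j > 0")
  case True
  then show ?thesis unfolding Phi_def using assms by (auto intro!: exI[of _ j] exI[of _ c])
next
  case False
  then have hn: "h $ j < 0" using assms(1) by linarith
  have "-c - 1/2 = - (c - 1/2) - 1" by simp
  also have "... \<in> \<int>" by (metis Ints_1 Ints_diff Ints_minus assms(2))
  finally have i: "-c - 1/2 \<in> \<int>" .
  have "c / h $ j = (-c) / \<bar>h $ j\<bar>" using hn by simp
  then show ?thesis unfolding Phi_def using assms(1,3) i by (auto intro!: exI[of _ j] exI[of _ "-c"])
qed

lemma between:
  fixes hj x t m a b :: real
  assumes "hj \<noteq> 0" "a \<le> x" "x < b" "a < m" "m < b"
    "(hj*x < hj*t \<and> hj*t \<le> hj*m) \<or> (hj*m < hj*t \<and> hj*t < hj*x)"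
  shows "a < t \<and> t < b"
proof (cases "hj > 0")
  case True
  then have "(x < t \<and> t \<le> m) \<or> (m < t \<and> t < x)" using assms(6) by simp
  then show ?thesis using assms by auto
next
  case False
  then have "hj < 0" using assms(1) by linarith
  then have "(x > t \<and> t \<ge> m) \<or> (m > t \<and> t > x)" using assms(6) by (simp add: mult_less_cancel_left mult_le_cancel_left)
  then show ?thesis using assms by auto
qed

lemma coord_bound:
  fixes h :: "real^'n"
  assumes P0: "P \<ge> 0" and hj: "h $ j \<noteq> 0" and L: "L = sorted_list_of_set (Phi P h)"
    and i: "Suc i < length L" "L!i \<le> x" "x < L!Suc i"
    and xb: "\<bar>h $ j * x\<bar> < of_int \<lceil>psi P h\<rceil>"
  shows "\<bar>of_int (round (h $ j * ((L!i + L!Suc i)/2))) - h $ j * x\<bar> \<le> 1/2"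
proof -
  define N where "N = (of_int \<lceil>psi P h\<rceil> :: real)"
  define R where "R = (N + 1/2) / \<bar>h $ j\<bar>"
  have hpos: "\<bar>h $ j\<bar> > 0" using hj by simp
  have sL: "sorted L" and setL: "set L = Phi P h" using L Phi_finite[of P h] by auto
  have NI: "N \<in> \<int>" unfolding N_def by simp
  have "psi P h \<ge> 0" using P0 by (simp add: psi_def)
  then have N0: "0 \<le> real_of_int \<lceil>psi P h\<rceil>" by simp
  have "R \<in> Phi P h" unfolding Phi_def R_def N_def using hj N0
    by (auto intro!: exI[of _ j] exI[of _ "of_int \<lceil>psi P h\<rceil> + 1/2"])
  then have Rin: "R \<in> set L" using setL by simp
  have e1: "-R = (-(N+1/2))/\<bar>h $ j\<bar>" unfolding R_def by (simp only: minus_divide_left)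
  have "-(N+1/2) - 1/2 = -N - 1" by simp
  then have e2: "-(N+1/2) - 1/2 \<in> \<int>" using NI by (metis Ints_1 Ints_diff Ints_minus)
  have "N \<ge> 0" using N0 N_def by simp
  then have e3: "\<bar>-(N+1/2)\<bar> \<le> N + 1/2" by linarith
  have "-R \<in> {c / \<bar>h $ j\<bar> | c. c - 1/2 \<in> \<int> \<and> \<bar>c\<bar> \<le> of_int \<lceil>psi P h\<rceil> + 1/2}"
    using e1 e2 e3[unfolded N_def] N_def by (intro CollectI exI[of _ "-(N+1/2)"]) simp
  then have "-R \<in> Phi P h" unfolding Phi_def using hj by (intro UN_I[of j]) auto
  then have mRin: "-R \<in> set L" using setL by simp
  have ax: "\<bar>x\<bar> * \<bar>h $ j\<bar> < N" using xb unfolding N_def by (simp add: abs_mult mult.commute)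
  have "\<bar>x\<bar> < R" unfolding R_def using ax hpos by (simp add: pos_less_divide_eq)
  then have xR: "-R < x" "x < R" by auto
  have up: "L!Suc i \<le> R"
  proof (rule ccontr)
    assume "\<not> L!Suc i \<le> R"
    then show False using gap[OF sL i(1) Rin] i xR by linarith
  qed
  have lo: "-R \<le> L!i"
  proof (rule ccontr)
    assume "\<not> -R \<le> L!i"
    then show False using gap[OF sL i(1) mRin] i xR by linarith
  qed
  define m where "m = (L!i + L!Suc i)/2"
  have m: "L!i < m" "m < L!Suc i" using i unfolding m_def by auto
  define k where "k = round (h $ j * m)"
  have k1: "of_int k > h $ j * m - 1/2" "of_int k \<le> h $ j * m + 1/2"
    unfolding k_def using of_int_round_gt of_int_round_le by auto
  have contra: False if c: "(h$j*x < c \<and> c \<le> h$j*m) \<or> (h$j*m < c \<and> c < h$j*x)" and cI: "c - 1/2 \<in> \<int>" for c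
  proof -
    define t where "t = c / h $ j"
    have ht: "h $ j * t = c" unfolding t_def using hj by simp
    have tb: "L!i < t \<and> t < L!Suc i"
      using between[OF hj i(2,3) m, of t] c ht by simp
    have "\<bar>t\<bar> \<le> R" using tb up lo by auto
    then have "\<bar>t\<bar> * \<bar>h $ j\<bar> \<le> N + 1/2" unfolding R_def using hpos
      by (simp add: pos_le_divide_eq)
    then have "\<bar>c\<bar> \<le> N + 1/2" using ht[symmetric] by (simp add: abs_mult mult.commute)
    then have "t \<in> Phi P h" unfolding t_def using Phi_mem[OF hj cI] N_def by simp
    then show False using gap[OF sL i(1)] setL tb by auto
  qed
  show ?thesis
  proof (rule ccontr)
    assume "\<not> ?thesis"
    then have "\<bar>of_int k - h $ j * x\<bar> > 1/2" unfolding k_def m_def by simp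
    then consider "h$j*x < of_int k - 1/2" | "h$j*x > of_int k + 1/2" by linarith
    then show False
    proof cases
      case 1
      show False by (rule contra[of "of_int k - 1/2"]) (use 1 k1 in auto)
    next
      case 2
      have "of_int k + 1/2 - 1/2 \<in> \<int>" by simp
      then show False by (intro contra[of "of_int k + 1/2"]) (use 2 k1 in auto)
    qed
  qed
qed

lemma diagG: "Gmat P h $ j $ j = (1 + P*(norm h)^2) - P*(h$j)^2"
  by (simp add: Gmat_def power2_eq_square)

lemma fq_axis: "s^2 = 1 \<Longrightarrow> fq P h (axis j s) = Gmat P h $ j $ j"
  unfolding fq_eq diagG by (simp add: inner_axis inner_axis_axis power_mult_distrib power2_eq_square)

lemma aa_ge1: assumes "int_vec a" "a \<noteq> 0" shows "a \<bullet> a \<ge> 1"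
proof -
  obtain j where j: "a $ j \<noteq> 0" using assms(2) by (auto simp: vec_eq_iff)
  obtain z where z: "a $ j = of_int z" using assms(1) unfolding int_vec_def by (metis Ints_cases)
  have "z \<noteq> 0" using j z by simp
  then have "\<bar>a $ j\<bar> \<ge> 1" using z by linarith
  then have "1 \<le> a $ j * a $ j" by (metis abs_mult_self_eq mult_mono abs_ge_zero mult_1_right zero_le_one)
  also have "... \<le> (\<Sum>k\<in>UNIV. a $ k * a $ k)" by (rule member_le_sum) auto
  finally show ?thesis by (simp add: inner_vec_def)
qed

lemma sgn_sq:
  fixes y :: real
  assumes "z \<noteq> 0" "\<bar>y\<bar> \<le> 1/2"
  shows "((if of_int z > (0::real) then 1 else -1) - y)^2 \<le> (of_int z - y)^2"
proof (cases "z > 0")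
  case True
  then have "(1::real) \<le> of_int z" by simp
  then have "0 \<le> 1 - y" "1 - y \<le> of_int z - y" using assms by auto
  then show ?thesis using True by (simp add: power_mono)
next
  case False
  then have "of_int z \<le> (-1::real)" using assms(1) by simp
  then have "\<bar>-1 - y\<bar> \<le> \<bar>of_int z - y\<bar>" using assms by auto
  then show ?thesis using False by (simp add: abs_le_square_iff)
qed

lemma lower:
  fixes P :: real and h :: "real^'n"
  assumes P0: "P \<ge> 0" and h0: "h \<noteq> 0" and ai: "int_vec a" and a0: "a \<noteq> 0"
  shows "\<exists>c \<in> {Gmat P h $ i $ i | i. True} \<union>
      {fq P h (avec h ((xi P h i + xi P h (i+1)) / 2)) | i.
          i + 1 < mcard P h \<and> avec h ((xi P h i + xi P h (i+1)) / 2) \<noteq> 0}. c \<le> fq P h a"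
proof -
  define Q where "Q = 1 + P*(norm h)^2"
  have Q1: "Q \<ge> 1" unfolding Q_def using P0 by simp
  define D where "D v x = (\<Sum>j\<in>UNIV. (v$j - x*h$j)^2)" for v :: "real^'n" and x
  have keyle: "P * fq P h v \<le> Q * (P * D v x + x^2)" for v x
  proof -
    have k: "Q * (P * D v x + x^2) - P * fq P h v = (Q*x - P*(h \<bullet> v))^2"
      unfolding Q_def D_def by (rule key_ident)
    show ?thesis using k zero_le_power2[of "Q*x - P*(h \<bullet> v)"] by linarith
  qed
  have D0: "D v x \<ge> 0" for v x unfolding D_def by (simp add: sum_nonneg)
  have Dle: "D b x \<le> D a x" if "\<And>j. (b$j - x*h$j)^2 \<le> (a$j - x*h$j)^2" for b x
    unfolding D_def using that by (simp add: sum_mono)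
  have aint: "\<exists>z. a $ j = of_int z" for j using ai unfolding int_vec_def by (metis Ints_cases)
  fix j0 :: 'n
  show ?thesis
  proof (cases "P = 0 \<or> fq P h a \<ge> Q")
    case True
    have "Gmat P h $ j0 $ j0 \<le> fq P h a"
    proof (cases "P = 0")
      case True
      then show ?thesis using aa_ge1[OF ai a0] by (simp add: diagG fq_eq)
    next
      case False
      then have "fq P h a \<ge> Q" using \<open>P = 0 \<or> fq P h a \<ge> Q\<close> by simp
      have "P*(h$j0)^2 \<ge> 0" using P0 by simp
      then show ?thesis unfolding diagG using \<open>fq P h a \<ge> Q\<close> Q_def by linarith
    qed
    then show ?thesis by blast
  next
    case False
    then have Ppos: "P > 0" and fqQ: "fq P h a < Q" using P0 by auto
    define x where "x = P * (h \<bullet> a) / Q"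
    have "Q * (P * D a x + x^2) - P * fq P h a = 0"
      using key_ident[of P h a x] Q1 unfolding Q_def[symmetric] D_def[symmetric] x_def by simp
    then have Eq: "Q * (P * D a x + x^2) = P * fq P h a" by simp
    have "Q * (P * D a x) \<ge> 0" using Q1 Ppos D0[of a x] by simp
    then have "Q * x^2 \<le> P * fq P h a" using Eq by (simp add: distrib_left)
    also have "... < P * Q" using fqQ Ppos by simp
    finally have x2: "x^2 < P" using Q1 by (simp add: mult.commute)
    define N where "N = (of_int \<lceil>psi P h\<rceil> :: real)"
    have psiQ: "psi P h = sqrt Q" unfolding psi_def Q_def by simp
    have xb: "\<bar>h $ j * x\<bar> < N" for j
    proof -
      have hn: "\<bar>h $ j\<bar> \<le> norm h" by (rule component_le_norm_cart)
      have "(h$j)^2 \<le> (norm h)^2" using power_mono[OF hn abs_ge_zero, of 2] by simp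
      then have "(h $ j * x)^2 \<le> (norm h)^2 * x^2" by (simp add: power_mult_distrib mult_right_mono)
      also have "... \<le> (norm h)^2 * P" using x2 by (simp add: mult_left_mono)
      also have "... < Q" unfolding Q_def by simp
      finally have "\<bar>h $ j * x\<bar>^2 < Q" by simp
      then have "\<bar>h $ j * x\<bar> < sqrt Q" by (rule real_less_rsqrt)
      then show ?thesis unfolding N_def psiQ by (meson le_of_int_ceiling less_le_trans)
    qed
    obtain j1 where hj1: "h $ j1 \<noteq> 0" using h0 by (auto simp: vec_eq_iff)
    define R where "R = (N + 1/2) / \<bar>h $ j1\<bar>"
    have hpos: "\<bar>h $ j1\<bar> > 0" using hj1 by simp
    define L where "L = sorted_list_of_set (Phi P h)"
    have sL: "sorted L" and setL: "set L = Phi P h" and lenL: "length L = mcard P h"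
      using Phi_finite[of P h] unfolding L_def mcard_def by auto
    have "psi P h \<ge> 0" using P0 by (simp add: psi_def)
    then have N0: "N \<ge> 0" unfolding N_def by simp
    have NI: "N \<in> \<int>" unfolding N_def by simp
    have "R \<in> {c / \<bar>h $ j1\<bar> | c. c - 1/2 \<in> \<int> \<and> \<bar>c\<bar> \<le> of_int \<lceil>psi P h\<rceil> + 1/2}"
      using N0 NI unfolding R_def N_def by (intro CollectI exI[of _ "N+1/2"]) (simp add: N_def)
    then have "R \<in> Phi P h" unfolding Phi_def using hj1 by (intro UN_I[of j1]) auto
    then have Rin: "R \<in> set L" using setL by simp
    have e1: "-R = (-(N+1/2))/\<bar>h $ j1\<bar>" unfolding R_def by (simp only: minus_divide_left)
    have "-(N+1/2) - 1/2 = -N - 1" by simp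
    then have e2: "-(N+1/2) - 1/2 \<in> \<int>" using NI by (metis Ints_1 Ints_diff Ints_minus)
    have e3: "\<bar>-(N+1/2)\<bar> \<le> N + 1/2" using N0 by linarith
    have "-R \<in> {c / \<bar>h $ j1\<bar> | c. c - 1/2 \<in> \<int> \<and> \<bar>c\<bar> \<le> of_int \<lceil>psi P h\<rceil> + 1/2}"
      using e1 e2 e3[unfolded N_def] N_def by (intro CollectI exI[of _ "-(N+1/2)"]) simp
    then have "-R \<in> Phi P h" unfolding Phi_def using hj1 by (intro UN_I[of j1]) auto
    then have mRin: "-R \<in> set L" using setL by simp
    have ax: "\<bar>x\<bar> * \<bar>h $ j1\<bar> < N" using xb[of j1] by (simp add: abs_mult mult.commute)
    have "\<bar>x\<bar> < R" unfolding R_def using ax hpos by (simp add: pos_less_divide_eq)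
    then have xR: "-R \<le> x" "x < R" by auto
    obtain i where i: "Suc i < length L" "L!i \<le> x" "x < L!Suc i"
      using bracket[OF sL mRin xR(1) Rin xR(2)] by blast
    define m where "m = (xi P h i + xi P h (i+1)) / 2"
    have mL: "m = (L!i + L!Suc i)/2" unfolding m_def xi_def L_def by simp
    define b where "b = avec h m"
    have bj: "b $ j = of_int (round (h $ j * m))" for j unfolding b_def avec_def by simp
    have bb: "\<bar>b $ j - h $ j * x\<bar> \<le> 1/2" for j
    proof (cases "h $ j = 0")
      case True then show ?thesis by (simp add: bj)
    next
      case False
      show ?thesis unfolding bj mL
        using coord_bound[OF P0 False L_def i xb[of j, unfolded N_def]] .
    qed
    have Dba: "D b x \<le> D a x"
    proof (rule Dle)
      fix j
      obtain z where z: "a $ j = of_int z" using aint by blast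
      have "(b $ j - h $ j * x)^2 \<le> (of_int z - h $ j * x)^2"
        using int_sq[of "round (h $ j * m)" "h $ j * x" z] bb[of j] by (simp add: bj)
      then show "(b$j - x*h$j)^2 \<le> (a$j - x*h$j)^2" using z by (simp add: mult.commute)
    qed
    show ?thesis
    proof (cases "b = 0")
      case False
      have mem: "fq P h b \<in> {fq P h (avec h ((xi P h i + xi P h (i+1)) / 2)) | i.
          i + 1 < mcard P h \<and> avec h ((xi P h i + xi P h (i+1)) / 2) \<noteq> 0}"
        using False i(1) lenL unfolding b_def m_def by auto
      have "P * fq P h b \<le> Q * (P * D b x + x^2)" by (rule keyle)
      also have "... \<le> Q * (P * D a x + x^2)" using Dba Ppos Q1 by (simp add: mult_left_mono)
      also have "... = P * fq P h a" by (rule Eq)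
      finally have "fq P h b \<le> fq P h a" using Ppos by simp
      then show ?thesis using mem by blast
    next
      case True
      then have hx: "\<bar>h $ j * x\<bar> \<le> 1/2" for j using bb[of j] by simp
      obtain j where j: "a $ j \<noteq> 0" using a0 by (auto simp: vec_eq_iff)
      obtain z where z: "a $ j = of_int z" using aint by blast
      have z0: "z \<noteq> 0" using j z by simp
      define s :: real where "s = (if of_int z > (0::real) then 1 else -1)"
      define e where "e = axis j s"
      have s2: "s^2 = 1" unfolding s_def by simp
      have Dea: "D e x \<le> D a x"
      proof (rule Dle)
        fix k
        show "(e$k - x*h$k)^2 \<le> (a$k - x*h$k)^2"
        proof (cases "k = j")
          case True
          then show ?thesis using sgn_sq[OF z0 hx[of j]] z unfolding e_def s_def
            by (simp add: mult.commute)
        next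
          case False
          obtain w where w: "a $ k = of_int w" using aint by blast
          have "(of_int 0 - h $ k * x)^2 \<le> (of_int w - h $ k * x)^2"
            using int_sq[of 0 "h $ k * x" w] hx[of k] by simp
          then show ?thesis using False w unfolding e_def by (simp add: axis_def mult.commute)
        qed
      qed
      have "P * fq P h e \<le> Q * (P * D e x + x^2)" by (rule keyle)
      also have "... \<le> Q * (P * D a x + x^2)" using Dea Ppos Q1 by (simp add: mult_left_mono)
      also have "... = P * fq P h a" by (rule Eq)
      finally have "fq P h e \<le> fq P h a" using Ppos by simp
      moreover have "fq P h e = Gmat P h $ j $ j" unfolding e_def by (rule fq_axis[OF s2])
      ultimately show ?thesis by auto
    qed
  qed
qed

theorem mainTheorem4:
  fixes P :: real and h :: "real^'n"
  assumes "P \<ge> 0" and "h \<noteq> 0"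
  shows "(\<exists>a. int_vec a \<and> a \<noteq> 0 \<and> fq P h a = rhs_val P h)
       \<and> (\<forall>a. int_vec a \<and> a \<noteq> 0 \<longrightarrow> rhs_val P h \<le> fq P h a)"
proof -
  define S1 where "S1 = {Gmat P h $ i $ i | i. True}"
  define S2 where "S2 = {fq P h (avec h ((xi P h i + xi P h (i+1)) / 2)) | i.
          i + 1 < mcard P h \<and> avec h ((xi P h i + xi P h (i+1)) / 2) \<noteq> 0}"
  have r: "rhs_val P h = Min (S1 \<union> S2)" unfolding rhs_val_def S1_def S2_def ..
  have f1: "finite S1" unfolding S1_def by (simp add: full_SetCompr_eq)
  have "S2 \<subseteq> (\<lambda>i. fq P h (avec h ((xi P h i + xi P h (i+1)) / 2))) ` {..<mcard P h}"
    unfolding S2_def by auto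
  then have f2: "finite S2" by (rule finite_subset) simp
  have ne: "S1 \<union> S2 \<noteq> {}" unfolding S1_def by auto
  have fin: "finite (S1 \<union> S2)" using f1 f2 by simp
  have part1: "\<exists>a. int_vec a \<and> a \<noteq> 0 \<and> fq P h a = rhs_val P h"
  proof -
    have "Min (S1 \<union> S2) \<in> S1 \<union> S2" using Min_in[OF fin ne] .
    then show ?thesis
    proof
      assume "Min (S1 \<union> S2) \<in> S1"
      then obtain i where i: "Min (S1 \<union> S2) = Gmat P h $ i $ i" unfolding S1_def by auto
      have "int_vec (axis i (1::real))" unfolding int_vec_def axis_def by simp
      moreover have "axis i (1::real) \<noteq> 0" by (simp add: axis_eq_0_iff)
      moreover have "fq P h (axis i 1) = rhs_val P h" using fq_axis[of 1 P h i] i r by simp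
      ultimately show ?thesis by blast
    next
      assume "Min (S1 \<union> S2) \<in> S2"
      then obtain i where i: "Min (S1 \<union> S2) = fq P h (avec h ((xi P h i + xi P h (i+1)) / 2))"
        "avec h ((xi P h i + xi P h (i+1)) / 2) \<noteq> 0" unfolding S2_def by auto
      have "int_vec (avec h ((xi P h i + xi P h (i+1)) / 2))" unfolding int_vec_def avec_def by simp
      then show ?thesis using i r by (intro exI[of _ "avec h ((xi P h i + xi P h (i+1)) / 2)"]) simp
    qed
  qed
  have part2: "\<forall>a. int_vec a \<and> a \<noteq> 0 \<longrightarrow> rhs_val P h \<le> fq P h a"
  proof (intro allI impI)
    fix a :: "real^'n" assume a: "int_vec a \<and> a \<noteq> 0"
    obtain c where c: "c \<in> S1 \<union> S2" "c \<le> fq P h a"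
      using lower[OF assms a[THEN conjunct1] a[THEN conjunct2]] unfolding S1_def S2_def by blast
    have "Min (S1 \<union> S2) \<le> c" using Min_le[OF fin c(1)] .
    then show "rhs_val P h \<le> fq P h a" using r c(2) by simp
  qed
  show ?thesis using part1 part2 by blast
qed

end
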